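(* Let $a\in(-1,0)$ and let $f:\mathbb{R}\to\mathbb{R}$ be a smooth odd function, $f(-x_1)=-f(x_1)$, with $f(x_1)\neq 0$ for all $x_1\in[-2\sqrt{3}/9,\,0)$. For $\alpha\in\mathbb{R}$ consider the planar system $$\frac{dx_1}{dt}=F_1(x;\alpha)=a x_1+x_2+\tfrac32 a x_1x_2+\tfrac32 x_2^2+\alpha f(x_1),\qquad \frac{dx_2}{dt}=F_2(x)=x_1+a x_2+a x_2^2 .$$ Then, as $\alpha$ is varied in a neighbourhood of $0$, this system undergoes a supercritical homoclinic bifurcation in a generic way, i.e. at $\alpha=0$ the following hold: (i) the origin is a saddle fixed point with Jacobian eigenvalues $\lambda_1(0)<0<\lambda_2(0)$; (ii) there is a homoclinic orbit $\gamma^*$ to the origin (namely the alpha loop $\{(x_1,x_2): -x_1^2+x_2^2(1+x_2)=0,\ x_2<0\}$); (iii) the saddle quantity $\sigma_0=\lambda_1(0)+\lambda_2(0)$ is nonzero, and in fact $\sigma_0<0$; (iv) the Melnikov integral $$M(0)=\int_{-\infty}^{+\infty}\varphi(t)\Big(F_1\frac{\partial F_2}{\partial\alpha}-F_2\frac{\partial F_1}{\partial\alpha}\Big)\Big|_{x=x(t),\,\alpha=0}\,dt,\qquad \varphi(t)=\exp\Big(-\int_0^t (\nabla\cdot F)(x(\tau);0)\,d\tau\Big),$$ evaluated along the homoclinic orbit $x(t)$ (parametrised so that $x(0)=(0,-1)$), is nonzero.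
   Context: A homoclinic orbit to a fixed point $x^*$ is an orbit whose $\alpha$-limit and $\omega$-limit sets both equal $\{x^*\}$. Conditions (i)–(iv) are the bifurcation and genericity conditions of the Andronov–Leontovich theorem; when they hold, for all sufficiently small $|\alpha|$ a unique limit cycle bifurcates from $\gamma^*$ in a neighbourhood of the saddle and the homoclinic orbit, and the bifurcation is called supercritical when $\sigma_0<0$ (the bifurcating limit cycle is then stable). *)

theory Defs
  imports "HOL-Analysis.Analysis"
begin

definition F1 :: "real \<Rightarrow> (real \<Rightarrow> real) \<Rightarrow> real \<Rightarrow> real \<Rightarrow> real \<Rightarrow> real" where
  "F1 a f \<alpha> x1 x2 = a*x1 + x2 + 3/2*a*x1*x2 + 3/2*x2^2 + \<alpha> * f x1"

text \<open>F2 does not depend on alpha; the parameter is kept for uniformity.\<close>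
definition F2 :: "real \<Rightarrow> real \<Rightarrow> real \<Rightarrow> real \<Rightarrow> real" where
  "F2 a \<alpha> x1 x2 = x1 + a*x2 + a*x2^2"

definition Fv :: "real \<Rightarrow> (real \<Rightarrow> real) \<Rightarrow> real \<Rightarrow> real^2 \<Rightarrow> real^2" where
  "Fv a f \<alpha> p = (\<chi> i. if i = 1 then F1 a f \<alpha> (p$1) (p$2) else F2 a \<alpha> (p$1) (p$2))"

definition divF :: "real \<Rightarrow> (real \<Rightarrow> real) \<Rightarrow> real \<Rightarrow> real^2 \<Rightarrow> real" where
  "divF a f \<alpha> p = deriv (\<lambda>y. F1 a f \<alpha> y (p$2)) (p$1) + deriv (\<lambda>y. F2 a \<alpha> (p$1) y) (p$2)"

definition oint :: "real \<Rightarrow> (real \<Rightarrow> real) \<Rightarrow> real" where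
  "oint t g = (if 0 \<le> t then integral {0..t} g else - integral {t..0} g)"

definition melnikov_integrand ::
  "real \<Rightarrow> (real \<Rightarrow> real) \<Rightarrow> (real \<Rightarrow> real^2) \<Rightarrow> real \<Rightarrow> real" where
  "melnikov_integrand a f x t =
     exp (- oint t (\<lambda>\<tau>. divF a f 0 (x \<tau>))) *
     (F1 a f 0 (x t $ 1) (x t $ 2) * deriv (\<lambda>\<alpha>. F2 a \<alpha> (x t $ 1) (x t $ 2)) 0
      - F2 a 0 (x t $ 1) (x t $ 2) * deriv (\<lambda>\<alpha>. F1 a f \<alpha> (x t $ 1) (x t $ 2)) 0)"

definition omega_limit :: "(real \<Rightarrow> 'a::metric_space) \<Rightarrow> 'a set" where
  "omega_limit x = {p. \<exists>s. filterlim s at_top sequentially \<and> (x \<circ> s) \<longlonglongrightarrow> p}"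

definition alpha_limit :: "(real \<Rightarrow> 'a::metric_space) \<Rightarrow> 'a set" where
  "alpha_limit x = {p. \<exists>s. filterlim s at_bot sequentially \<and> (x \<circ> s) \<longlonglongrightarrow> p}"

end

theory Submission
  imports Defs
begin


definition Tm :: "real \<Rightarrow> real \<Rightarrow> real" where
  "Tm a v = - ln (1 - v) / (1 - a) + ln (1 + v) / (1 + a) + 2*a/(1-a^2) * ln (1 - a * v)"

definition Tm' :: "real \<Rightarrow> real \<Rightarrow> real" where
  "Tm' a v = 2 / ((1 - v^2) * (1 - a * v))"

definition uu :: "real \<Rightarrow> real \<Rightarrow> real" where
  "uu a t = inv_into {-1<..<1} (Tm a) t"

lemma alg1:
  fixes a v :: real
  assumes "1 - a \<noteq> 0" "1 + a \<noteq> 0" "1 - v \<noteq> 0" "1 + v \<noteq> 0" "1 - a * v \<noteq> 0"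
  shows "- (-1 / (1 - v)) / (1 - a) + (1/(1+v)) / (1 + a) + 2*a/(1-a^2) * ((- a) / (1 - a * v)) = 2 / ((1 - v^2) * (1 - a * v))"
proof -
  have e1: "1 - a^2 = (1-a)*(1+a)" "1 - v^2 = (1-v)*(1+v)" by (simp_all add: algebra_simps power2_eq_square)
  show ?thesis unfolding e1 using assms
    apply (simp add: divide_simps)
    apply (simp add: algebra_simps)
    done
qed

locale hb = fixes a :: real assumes a1: "-1 < a" and a0: "a < 0"
begin

lemma av_pos: "\<bar>v\<bar> < 1 \<Longrightarrow> 0 < 1 - a * v"
proof -
  assume "\<bar>v\<bar> < 1"
  moreover have "\<bar>a\<bar> * \<bar>v\<bar> \<le> \<bar>v\<bar>" using a1 a0 by (intro mult_left_le_one_le) auto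
  ultimately have "\<bar>a * v\<bar> < 1" by (simp add: abs_mult)
  thus ?thesis by linarith
qed

lemma a2: "0 < 1 - a^2"
  using a1 a0 abs_square_less_1[of a] by auto

lemma Tm_deriv: "\<bar>v\<bar> < 1 \<Longrightarrow> (Tm a has_real_derivative Tm' a v) (at v)"
proof -
  assume v: "\<bar>v\<bar> < 1"
  have p: "0 < 1 - a * v" using av_pos v .
  have q: "0 < 1 - v" "0 < 1 + v" using v by auto
  have "(Tm a has_real_derivative
     (- (-1 / (1 - v)) / (1 - a) + (1/(1+v)) / (1 + a) + 2*a/(1-a^2) * ((- a) / (1 - a * v)))) (at v)"
    unfolding Tm_def[abs_def]
    apply (intro derivative_eq_intros)
    using p q a1 a0 by (auto simp: mult_ac)
  moreover have "(- (-1 / (1 - v)) / (1 - a) + (1/(1+v)) / (1 + a) + 2*a/(1-a^2) * ((- a) / (1 - a * v))) = Tm' a v"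
    unfolding Tm'_def using p q a1 a0 by (intro alg1) auto
  ultimately show ?thesis by simp
qed

lemma Tm'_pos: "\<bar>v\<bar> < 1 \<Longrightarrow> 0 < Tm' a v"
  unfolding Tm'_def using av_pos[of v] abs_square_less_1[of v] by auto

end


context hb
begin
lemma Tm_mono: assumes "-1 < v" "v < w" "w < 1" shows "Tm a v < Tm a w"
proof (rule DERIV_pos_imp_increasing[OF assms(2)])
  fix x assume "v \<le> x" "x \<le> w"
  hence x: "\<bar>x\<bar> < 1" using assms by auto
  show "\<exists>y. DERIV (Tm a) x :> y \<and> y > 0" using Tm_deriv[OF x] Tm'_pos[OF x] by blast
qed

lemma Tm_cont: "\<bar>v\<bar> < 1 \<Longrightarrow> isCont (Tm a) v"
  using Tm_deriv DERIV_isCont by blast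

lemma coef: "2*a/(1-a^2) \<le> 0"
  by (intro divide_nonpos_pos) (use a2 a0 in auto)

lemma Tm_big: "\<exists>v. 0 \<le> v \<and> v < 1 \<and> t \<le> Tm a v"
proof -
  define c where "c = 2*a/(1-a^2) * ln 2"
  define K where "K = max 0 ((1-a)*(t - c))"
  define v where "v = 1 - exp (-K)"
  have K0: "0 \<le> K" by (simp add: K_def)
  have v0: "0 \<le> v" "v < 1" using K0 by (auto simp: v_def)
  have lnv: "- ln (1 - v) = K" by (simp add: v_def)
  have "(-a) * v \<le> 1" using a1 a0 v0 by (intro mult_le_one) auto
  hence "ln (1 - a * v) \<le> ln 2"
    using av_pos[of v] v0 a1 a0 by (subst ln_le_cancel_iff) auto
  hence "c \<le> 2*a/(1-a^2) * ln (1 - a * v)"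
    unfolding c_def using coef by (intro mult_left_mono_neg) auto
  moreover have "0 \<le> ln (1 + v) / (1 + a)" using v0 a1 by auto
  moreover have "t - c \<le> K / (1 - a)" using a0 by (auto simp: K_def field_simps)
  ultimately have "t \<le> Tm a v" unfolding Tm_def lnv by (simp add: minus_divide_left[symmetric])
  thus ?thesis using v0 by blast
qed

lemma Tm_small: "\<exists>v. -1 < v \<and> v \<le> 0 \<and> Tm a v \<le> t"
proof -
  define c where "c = 2*a/(1-a^2) * ln (1 + a)"
  define K where "K = max 0 ((1+a)*(c - t))"
  define v where "v = exp (-K) - 1"
  have K0: "0 \<le> K" by (simp add: K_def)
  have v0: "-1 < v" "v \<le> 0" using K0 by (auto simp: v_def)
  have lnv: "ln (1 + v) = - K" by (simp add: v_def)
  have "(-a) * (-v) \<le> (-a)" using v0 a0 by (intro mult_left_le) auto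
  hence av: "a * v \<le> - a" by simp
  have "ln (1 + a) \<le> ln (1 - a * v)"
    using av_pos[of v] v0 a1 a0 av by (subst ln_le_cancel_iff) auto
  hence "2*a/(1-a^2) * ln (1 - a * v) \<le> c"
    unfolding c_def using coef by (intro mult_left_mono_neg) auto
  moreover have "- ln (1 - v) / (1 - a) \<le> 0" using v0 a0 by (auto intro!: divide_nonpos_pos)
  moreover have "-K / (1 + a) \<le> t - c" using a1 by (auto simp: K_def field_simps)
  ultimately have "Tm a v \<le> t" unfolding Tm_def lnv by simp
  thus ?thesis using v0 by blast
qed

lemma Tm_surj: "\<exists>v. -1 < v \<and> v < 1 \<and> Tm a v = t"
proof -
  obtain v1 where v1: "-1 < v1" "v1 \<le> 0" "Tm a v1 \<le> t" using Tm_small by blast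
  obtain v2 where v2: "0 \<le> v2" "v2 < 1" "t \<le> Tm a v2" using Tm_big by blast
  have "continuous_on {v1..v2} (Tm a)"
    using v1 v2 by (intro continuous_at_imp_continuous_on ballI Tm_cont) auto
  then obtain v where "v1 \<le> v" "v \<le> v2" "Tm a v = t" using IVT'[of "Tm a" v1 t v2] v1 v2 by auto
  thus ?thesis using v1 v2 by (intro exI[of _ v]) auto
qed

lemma Tm_inj: "inj_on (Tm a) {-1<..<1}"
proof (rule inj_onI)
  fix x y assume "x \<in> {-1<..<1::real}" "y \<in> {-1<..<1::real}" "Tm a x = Tm a y"
  thus "x = y" using Tm_mono[of x y] Tm_mono[of y x] by (cases x y rule: linorder_cases) auto
qed

lemma uu_in: "-1 < uu a t" "uu a t < 1" and Tm_uu: "Tm a (uu a t) = t"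
proof -
  have "t \<in> Tm a ` {-1<..<1}" using Tm_surj[of t] by auto
  thus "-1 < uu a t" "uu a t < 1" "Tm a (uu a t) = t" unfolding uu_def
    using inv_into_into[of t "Tm a" "{-1<..<1}"] f_inv_into_f[of t "Tm a" "{-1<..<1}"] by auto
qed

lemma uu_Tm: "-1 < v \<Longrightarrow> v < 1 \<Longrightarrow> uu a (Tm a v) = v"
  unfolding uu_def using inv_into_f_f[OF Tm_inj] by auto

lemma uu_mono: "t < s \<Longrightarrow> uu a t < uu a s"
proof (rule ccontr)
  assume "t < s" "\<not> uu a t < uu a s"
  hence "uu a s \<le> uu a t" by simp
  hence "Tm a (uu a s) \<le> Tm a (uu a t)" using Tm_mono[of "uu a s" "uu a t"] uu_in
    by (cases "uu a s = uu a t") (auto simp: less_eq_real_def)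
  thus False using \<open>t < s\<close> by (simp add: Tm_uu)
qed

lemma uu_cont: "isCont (uu a) t"
proof -
  define w where "w = uu a t"
  have w: "-1 < w" "w < 1" using uu_in by (auto simp: w_def)
  define d where "d = min (w + 1) (1 - w) / 2"
  have d: "0 < d" using w by (auto simp: d_def)
  have zz: "-1 < z \<and> z < 1" if "\<bar>z - w\<bar> \<le> d" for z
  proof -
    have "z - w \<le> d" "w - z \<le> d" using that by (auto simp: abs_le_iff)
    moreover have "d \<le> (w + 1) / 2" "d \<le> (1 - w) / 2" by (auto simp: d_def)
    ultimately show ?thesis using w by auto
  qed
  have "isCont (uu a) (Tm a w)"
    by (rule isCont_inverse_function[where f="Tm a" and g="uu a" and x=w, OF d]) (use zz uu_Tm Tm_cont in \<open>auto simp: abs_less_iff\<close>)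
  thus ?thesis by (simp add: w_def Tm_uu)
qed

lemma uu_deriv: "(uu a has_real_derivative ((1 - (uu a t)^2) * (1 - a * uu a t) / 2)) (at t)"
proof -
  have ab: "\<bar>uu a t\<bar> < 1" using uu_in[of t] by auto
  have der: "DERIV (Tm a) (uu a t) :> Tm' a (uu a t)" using Tm_deriv[OF ab] .
  have pos: "Tm' a (uu a t) \<noteq> 0" using Tm'_pos[OF ab] by simp
  have "(uu a has_real_derivative inverse (Tm' a (uu a t))) (at t)"
    by (rule DERIV_inverse_function[where f="Tm a" and g="uu a" and x=t and a="t-1" and b="t+1", OF der pos]) (auto simp: Tm_uu uu_cont)
  thus ?thesis by (simp add: Tm'_def)
qed

lemma uu_top: "(uu a \<longlongrightarrow> 1) at_top"
proof (rule order_tendstoI)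
  fix y :: real assume "y < 1"
  define z where "z = max y 0"
  have z: "-1 < z" "z < 1" "y \<le> z" using \<open>y < 1\<close> by (auto simp: z_def)
  show "\<forall>\<^sub>F x in at_top. y < uu a x"
    unfolding eventually_at_top_linorder
  proof (intro exI[of _ "Tm a z + 1"] allI impI)
    fix x assume "Tm a z + 1 \<le> x"
    hence "uu a (Tm a z) < uu a x" by (intro uu_mono) auto
    thus "y < uu a x" using uu_Tm z by auto
  qed
next
  fix y :: real assume "1 < y"
  thus "\<forall>\<^sub>F x in at_top. uu a x < y" by (intro always_eventually allI) (metis uu_in(2) less_trans)
qed

lemma uu_bot: "(uu a \<longlongrightarrow> -1) at_bot"
proof (rule order_tendstoI)
  fix y :: real assume "-1 < y"
  define z where "z = min y 0"
  have z: "-1 < z" "z < 1" "z \<le> y" using \<open>-1 < y\<close> by (auto simp: z_def)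
  show "\<forall>\<^sub>F x in at_bot. uu a x < y"
    unfolding eventually_at_bot_linorder
  proof (intro exI[of _ "Tm a z - 1"] allI impI)
    fix x assume "x \<le> Tm a z - 1"
    hence "uu a x < uu a (Tm a z)" by (intro uu_mono) auto
    thus "uu a x < y" using uu_Tm z by auto
  qed
next
  fix y :: real assume "y < -1"
  thus "\<forall>\<^sub>F x in at_bot. y < uu a x" by (intro always_eventually allI) (metis uu_in(1) less_trans)
qed

end



definition X1 :: "real \<Rightarrow> real" where "X1 v = (1 - v^2) * v"
definition X2 :: "real \<Rightarrow> real" where "X2 v = v^2 - 1"
definition e1 :: "real^2" where "e1 = (\<chi> i. if i = 1 then 1 else 0)"
definition e2 :: "real^2" where "e2 = (\<chi> i. if i = 1 then 0 else 1)"
definition xx :: "real \<Rightarrow> real \<Rightarrow> real^2" where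
  "xx a t = (\<chi> i. if i = 1 then X1 (uu a t) else X2 (uu a t))"

lemma xx_eq: "xx a t = X1 (uu a t) *\<^sub>R e1 + X2 (uu a t) *\<^sub>R e2"
  by (simp add: vec_eq_iff forall_2 xx_def e1_def e2_def)

lemma xx_comp [simp]: "xx a t $ 1 = X1 (uu a t)" "xx a t $ 2 = X2 (uu a t)"
  by (simp_all add: xx_def)

context hb begin

lemma X1_d: "(X1 has_real_derivative (1 - 3 * v^2)) (at v)"
  unfolding X1_def[abs_def] by (auto intro!: derivative_eq_intros simp: algebra_simps power2_eq_square)

lemma X2_d: "(X2 has_real_derivative (2 * v)) (at v)"
  unfolding X2_def[abs_def] by (auto intro!: derivative_eq_intros)

lemma X1_deriv: "((\<lambda>t. X1 (uu a t)) has_real_derivative (1 - 3 * (uu a t)^2) * ((1 - (uu a t)^2) * (1 - a * uu a t) / 2)) (at t)"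
  by (rule DERIV_chain2[OF X1_d uu_deriv])

lemma X2_deriv: "((\<lambda>t. X2 (uu a t)) has_real_derivative 2 * uu a t * ((1 - (uu a t)^2) * (1 - a * uu a t) / 2)) (at t)"
  by (rule DERIV_chain2[OF X2_d uu_deriv])

lemma F1_alg: "F1 a f 0 (X1 u) (X2 u) = (1 - 3 * u^2) * ((1 - u^2) * (1 - a * u) / 2)"
  unfolding F1_def X1_def X2_def by (simp add: field_simps power2_eq_square)

lemma F2_alg: "F2 a 0 (X1 u) (X2 u) = 2 * u * ((1 - u^2) * (1 - a * u) / 2)"
  unfolding F2_def X1_def X2_def by (simp add: field_simps power2_eq_square)

lemma xx_deriv: "(xx a has_vector_derivative Fv a f 0 (xx a t)) (at t)"
proof -
  have "((\<lambda>t. X1 (uu a t) *\<^sub>R e1 + X2 (uu a t) *\<^sub>R e2) has_vector_derivative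
      (X1 (uu a t) *\<^sub>R 0 + ((1 - 3 * (uu a t)^2) * ((1 - (uu a t)^2) * (1 - a * uu a t) / 2)) *\<^sub>R e1) +
      (X2 (uu a t) *\<^sub>R 0 + (2 * uu a t * ((1 - (uu a t)^2) * (1 - a * uu a t) / 2)) *\<^sub>R e2)) (at t)"
    by (intro has_vector_derivative_add has_vector_derivative_scaleR X1_deriv X2_deriv has_vector_derivative_const)
  moreover have "(X1 (uu a t) *\<^sub>R 0 + ((1 - 3 * (uu a t)^2) * ((1 - (uu a t)^2) * (1 - a * uu a t) / 2)) *\<^sub>R e1) +
      (X2 (uu a t) *\<^sub>R 0 + (2 * uu a t * ((1 - (uu a t)^2) * (1 - a * uu a t) / 2)) *\<^sub>R e2) = Fv a f 0 (xx a t)"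
    by (simp add: vec_eq_iff forall_2 Fv_def e1_def e2_def F1_alg F2_alg)
  ultimately show ?thesis by (simp add: xx_eq[abs_def])
qed

lemma Tm0: "Tm a 0 = 0" by (simp add: Tm_def)

lemma uu0: "uu a 0 = 0" using uu_Tm[of 0] by (simp add: Tm0)

lemma xx0: "xx a 0 = (\<chi> i. if i = 1 then 0 else -1)"
  by (simp add: vec_eq_iff forall_2 uu0 X1_def X2_def)

lemma xx_range: "range (xx a) = {p. - ((p$1)^2) + ((p$2)^2) * (1 + p$2) = 0 \<and> p$2 < 0}"
proof (intro equalityI subsetI)
  fix p assume "p \<in> range (xx a)"
  then obtain t where p: "p = xx a t" by auto
  define u where "u = uu a t"
  have "u^2 < 1" using uu_in[of t] abs_square_less_1[of u] by (auto simp: u_def)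
  thus "p \<in> {p. - ((p$1)^2) + ((p$2)^2) * (1 + p$2) = 0 \<and> p$2 < 0}"
    by (simp add: p u_def[symmetric] X1_def X2_def algebra_simps power2_eq_square)
next
  fix p :: "real^2" assume "p \<in> {p. - ((p$1)^2) + ((p$2)^2) * (1 + p$2) = 0 \<and> p$2 < 0}"
  hence h: "(p$1)^2 = (p$2)^2 * (1 + p$2)" and n: "p$2 < 0" by auto
  define u where "u = - (p$1) / (p$2)"
  have u2: "u^2 = 1 + p$2" using h n by (simp add: u_def power_divide field_simps)
  hence "u^2 < 1" using n by simp
  hence uin: "-1 < u" "u < 1" using abs_square_less_1[of u] by auto
  have "X1 u = p$1" unfolding X1_def u2 using n by (simp add: u_def field_simps)
  moreover have "X2 u = p$2" unfolding X2_def u2 by simp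
  ultimately have "xx a (Tm a u) = p" using uu_Tm[OF uin] by (simp add: vec_eq_iff forall_2)
  thus "p \<in> range (xx a)" by (metis rangeI)
qed

lemma xx_top: "(xx a \<longlongrightarrow> 0) at_top"
proof -
  have "((\<lambda>t. X1 (uu a t) *\<^sub>R e1 + X2 (uu a t) *\<^sub>R e2) \<longlongrightarrow> X1 1 *\<^sub>R e1 + X2 1 *\<^sub>R e2) at_top"
    unfolding X1_def X2_def by (intro tendsto_intros uu_top)
  thus ?thesis by (simp add: xx_eq[abs_def] X1_def X2_def)
qed

lemma xx_bot: "(xx a \<longlongrightarrow> 0) at_bot"
proof -
  have "((\<lambda>t. X1 (uu a t) *\<^sub>R e1 + X2 (uu a t) *\<^sub>R e2) \<longlongrightarrow> X1 (-1) *\<^sub>R e1 + X2 (-1) *\<^sub>R e2) at_bot"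
    unfolding X1_def X2_def by (intro tendsto_intros uu_bot)
  thus ?thesis by (simp add: xx_eq[abs_def] X1_def X2_def)
qed

lemma omega_xx: "omega_limit (xx a) = {0}"
proof (intro equalityI subsetI)
  fix p assume "p \<in> omega_limit (xx a)"
  then obtain s where s: "filterlim s at_top sequentially" "(xx a \<circ> s) \<longlonglongrightarrow> p"
    by (auto simp: omega_limit_def)
  have "(xx a \<circ> s) \<longlonglongrightarrow> 0" using filterlim_compose[OF xx_top s(1)] by (simp add: o_def)
  thus "p \<in> {0}" using s(2) LIMSEQ_unique by auto
next
  fix p :: "real^2" assume "p \<in> {0}"
  hence "p = 0" by simp
  have "filterlim real at_top sequentially" by (rule filterlim_real_sequentially)
  moreover have "(xx a \<circ> real) \<longlonglongrightarrow> 0" using filterlim_compose[OF xx_top filterlim_real_sequentially] by (simp add: o_def)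
  ultimately show "p \<in> omega_limit (xx a)" unfolding omega_limit_def using \<open>p = 0\<close> by blast
qed

lemma alpha_xx: "alpha_limit (xx a) = {0}"
proof (intro equalityI subsetI)
  fix p assume "p \<in> alpha_limit (xx a)"
  then obtain s where s: "filterlim s at_bot sequentially" "(xx a \<circ> s) \<longlonglongrightarrow> p"
    by (auto simp: alpha_limit_def)
  have "(xx a \<circ> s) \<longlonglongrightarrow> 0" using filterlim_compose[OF xx_bot s(1)] by (simp add: o_def)
  thus "p \<in> {0}" using s(2) LIMSEQ_unique by auto
next
  fix p :: "real^2" assume "p \<in> {0}"
  hence "p = 0" by simp
  have fl: "filterlim (\<lambda>n. - real n) at_bot sequentially"
    by (subst filterlim_uminus_at_bot) (simp add: filterlim_real_sequentially)
  moreover have "(xx a \<circ> (\<lambda>n. - real n)) \<longlonglongrightarrow> 0" using filterlim_compose[OF xx_bot fl] by (simp add: o_def)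
  ultimately show "p \<in> alpha_limit (xx a)" unfolding alpha_limit_def using \<open>p = 0\<close> by blast
qed

end



lemma e_comp [simp]: "e1 $ 1 = 1" "e1 $ 2 = 0" "e2 $ 1 = 0" "e2 $ 2 = 1"
  by (simp_all add: e1_def e2_def)

lemma vn_der[derivative_intros]: "(g has_derivative g') F \<Longrightarrow> ((\<lambda>x. g x $ i) has_derivative (\<lambda>x. g' x $ i)) F"
  by (rule bounded_linear.has_derivative[OF bounded_linear_vec_nth])

definition DD :: "real \<Rightarrow> real^2 \<Rightarrow> real^2" where
  "DD a h = (a * h$1 + h$2) *\<^sub>R e1 + (h$1 + a * h$2) *\<^sub>R e2"

lemma Fv00: "Fv a f 0 0 = 0"
  by (simp add: vec_eq_iff forall_2 Fv_def F1_def F2_def)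

lemma Fv_alt: "Fv a f 0 = (\<lambda>p. (a * p$1 + p$2 + 3/2*a*p$1*p$2 + 3/2*(p$2)^2) *\<^sub>R e1 + (p$1 + a*p$2 + a*(p$2)^2) *\<^sub>R e2)"
  by (rule ext) (simp add: vec_eq_iff forall_2 Fv_def F1_def F2_def)

lemma Fv_der: "(Fv a f 0 has_derivative DD a) (at 0)"
  unfolding Fv_alt DD_def
  by (auto intro!: derivative_eq_intros ext simp: algebra_simps)

lemma vec2_nz: "(v::real^2) \<noteq> 0 \<longleftrightarrow> v$1 \<noteq> 0 \<or> v$2 \<noteq> 0"
  by (auto simp: vec_eq_iff forall_2)

lemma eigalg:
  fixes a l x y :: real
  assumes c1: "a*x + y = l*x" and c2: "x + a*y = l*y"
  shows "((l-a)^2 - 1) * x = 0" "((l-a)^2 - 1) * y = 0"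
proof -
  have y: "y = (l-a)*x" using c1 by (simp add: algebra_simps)
  have x: "x = (l-a)*y" using c2 by (simp add: algebra_simps)
  have "((l-a)^2 - 1) * x = (l-a)*((l-a)*x) - x" by (simp add: power2_eq_square algebra_simps)
  also have "\<dots> = 0" using x y by simp
  finally show "((l-a)^2 - 1) * x = 0" .
  have "((l-a)^2 - 1) * y = (l-a)*((l-a)*y) - y" by (simp add: power2_eq_square algebra_simps)
  also have "\<dots> = 0" using x y by simp
  finally show "((l-a)^2 - 1) * y = 0" .
qed

lemma DD_app: "DD a v = (\<chi> i. if i = 1 then a * v$1 + v$2 else v$1 + a * v$2)"
  by (simp add: DD_def vec_eq_iff forall_2)

lemma eig: "{l. \<exists>v. v \<noteq> 0 \<and> matrix (DD a) *v v = l *\<^sub>R v} = {a - 1, a + 1}"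
proof -
  have lin: "linear (DD a)" using has_derivative_linear[OF Fv_der] .
  have lin': "Vector_Spaces.linear (*s) (*s) (DD a)" using lin by (simp only: linear_def scalar_mult_eq_scaleR)
  have mw: "matrix (DD a) *v v = DD a v" for v using matrix_works[OF lin'] .
  show ?thesis
  proof (intro equalityI subsetI)
    fix l assume "l \<in> {l. \<exists>v. v \<noteq> 0 \<and> matrix (DD a) *v v = l *\<^sub>R v}"
    then obtain v where v: "v \<noteq> 0" "DD a v = l *\<^sub>R v" unfolding mw by blast
    have c1: "a * v$1 + v$2 = l * v$1" using arg_cong[OF v(2), of "\<lambda>w. w$1"] by (simp add: DD_app)
    have c2: "v$1 + a * v$2 = l * v$2" using arg_cong[OF v(2), of "\<lambda>w. w$2"] by (simp add: DD_app)
    have "(l-a)^2 - 1 = 0" using eigalg[OF c1 c2] v(1) vec2_nz by auto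
    hence "(l - a - 1) * (l - a + 1) = 0" by (simp add: power2_eq_square algebra_simps)
    thus "l \<in> {a - 1, a + 1}" by auto
  next
    fix l assume "l \<in> {a - 1, a + 1}"
    hence "l = a - 1 \<or> l = a + 1" by simp
    thus "l \<in> {l. \<exists>v. v \<noteq> 0 \<and> matrix (DD a) *v v = l *\<^sub>R v}"
    proof
      assume l: "l = a - 1"
      have "DD a (e1 - e2) = l *\<^sub>R (e1 - e2)" by (simp add: DD_app vec_eq_iff forall_2 l algebra_simps)
      moreover have "e1 - e2 \<noteq> 0" unfolding vec2_nz by simp
      ultimately show ?thesis unfolding mw by blast
    next
      assume l: "l = a + 1"
      have "DD a (e1 + e2) = l *\<^sub>R (e1 + e2)" by (simp add: DD_app vec_eq_iff forall_2 l algebra_simps)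
      moreover have "e1 + e2 \<noteq> 0" unfolding vec2_nz by simp
      ultimately show ?thesis unfolding mw by blast
    qed
  qed
qed

lemma divF_eq: "divF a f 0 p = 2*a + 7/2*a*(p$2)"
proof -
  have "(\<lambda>y. F1 a f 0 y (p$2)) = (\<lambda>y. a*y + p$2 + 3/2*a*y*(p$2) + 3/2*(p$2)^2)"
    by (simp add: F1_def)
  moreover have "((\<lambda>y. a*y + p$2 + 3/2*a*y*(p$2) + 3/2*(p$2)^2) has_real_derivative a + 3/2*a*(p$2)) (at (p$1))"
    by (auto intro!: derivative_eq_intros)
  moreover have "((\<lambda>y. F2 a 0 (p$1) y) has_real_derivative a + 2*a*(p$2)) (at (p$2))"
    unfolding F2_def by (auto intro!: derivative_eq_intros)
  ultimately show ?thesis unfolding divF_def by (simp add: DERIV_imp_deriv algebra_simps)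
qed

lemma dF2: "deriv (\<lambda>\<alpha>. F2 a \<alpha> x1 x2) 0 = 0"
  by (simp add: F2_def)

lemma dF1: "deriv (\<lambda>\<alpha>. F1 a f \<alpha> x1 x2) 0 = f x1"
proof -
  have "((\<lambda>\<alpha>. F1 a f \<alpha> x1 x2) has_real_derivative f x1) (at 0)"
    unfolding F1_def by (auto intro!: derivative_eq_intros)
  thus ?thesis by (rule DERIV_imp_deriv)
qed

lemma mi_eq: "melnikov_integrand a f x t =
   - exp (- oint t (\<lambda>\<tau>. 2*a + 7/2*a*(x \<tau> $ 2))) * F2 a 0 (x t $ 1) (x t $ 2) * f (x t $ 1)"
  unfolding melnikov_integrand_def dF1 dF2 divF_eq by simp

definition k1 :: "real \<Rightarrow> real" where "k1 a = 2*a/(1-a)"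
definition k2 :: "real \<Rightarrow> real" where "k2 a = 2*a/(1+a)"
definition k3 :: "real \<Rightarrow> real" where "k3 a = (7 - 3*a^2)/(a^2 - 1)"

definition EE :: "real \<Rightarrow> real \<Rightarrow> real" where
  "EE a v = k1 a * ln (1 - v) - k2 a * ln (1 + v) + k3 a * ln (1 - a * v)"

lemma alg2:
  fixes a v :: real
  assumes "1 - a \<noteq> 0" "1 + a \<noteq> 0" "1 - v \<noteq> 0" "1 + v \<noteq> 0" "1 - a * v \<noteq> 0"
  shows "2*a/(1-a) * (-1 / (1 - v)) - 2*a/(1+a) * (1 / (1 + v)) + (7 - 3*a^2)/(a^2 - 1) * (- a / (1 - a * v))
     = a * (3 - 7 * v^2) / ((1 - v^2) * (1 - a * v))"
proof -
  have e1: "a^2 - 1 = -((1-a)*(1+a))" "1 - v^2 = (1-v)*(1+v)" by (simp_all add: algebra_simps power2_eq_square)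
  show ?thesis unfolding e1 using assms
    apply (simp add: divide_simps)
    apply (simp add: algebra_simps power2_eq_square)
    done
qed

context hb begin

lemma EE_deriv: "\<bar>v\<bar> < 1 \<Longrightarrow> (EE a has_real_derivative a * (3 - 7 * v^2) / ((1 - v^2) * (1 - a * v))) (at v)"
proof -
  assume v: "\<bar>v\<bar> < 1"
  have p: "0 < 1 - a * v" using av_pos v .
  have q: "0 < 1 - v" "0 < 1 + v" using v by auto
  have "(EE a has_real_derivative
     k1 a * (-1 / (1 - v)) - k2 a * (1 / (1 + v)) + k3 a * (- a / (1 - a * v))) (at v)"
    unfolding EE_def[abs_def]
    using p q by (auto intro!: derivative_eq_intros)
  moreover have "k1 a * (-1 / (1 - v)) - k2 a * (1 / (1 + v)) + k3 a * (- a / (1 - a * v))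
     = a * (3 - 7 * v^2) / ((1 - v^2) * (1 - a * v))"
    unfolding k1_def k2_def k3_def using p q a1 a0 by (intro alg2) auto
  ultimately show ?thesis by simp
qed

lemma EE_uu_deriv: "((\<lambda>t. - EE a (uu a t)) has_real_derivative 2*a + 7/2*a*(X2 (uu a t))) (at t)"
proof -
  define u where "u = uu a t"
  have ab: "\<bar>u\<bar> < 1" using uu_in[of t] by (auto simp: u_def)
  have nz: "(1 - u^2) * (1 - a * u) \<noteq> 0" using av_pos[OF ab] abs_square_less_1[of u] ab by auto
  have "((\<lambda>t. - EE a (uu a t)) has_real_derivative
     - (a * (3 - 7 * u^2) / ((1 - u^2) * (1 - a * u)) * ((1 - u^2) * (1 - a * u) / 2))) (at t)"
    unfolding u_def by (intro DERIV_minus DERIV_chain2[OF EE_deriv uu_deriv]) (use ab u_def in auto)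
  moreover have "- (a * (3 - 7 * u^2) / ((1 - u^2) * (1 - a * u)) * ((1 - u^2) * (1 - a * u) / 2)) = 2*a + 7/2*a*(X2 u)"
    using nz by (simp add: X2_def field_simps)
  ultimately show ?thesis by (simp add: u_def)
qed

lemma EE0: "EE a 0 = 0" by (simp add: EE_def)

lemma oint_eq: "oint t (\<lambda>\<tau>. 2*a + 7/2*a*(xx a \<tau> $ 2)) = - EE a (uu a t)"
proof -
  let ?g = "\<lambda>t. - EE a (uu a t)"
  let ?g' = "\<lambda>\<tau>. 2*a + 7/2*a*(xx a \<tau> $ 2)"
  have d: "(?g has_vector_derivative ?g' x) (at x within S)" for x S
    using EE_uu_deriv[of x] by (simp add: has_real_derivative_iff_has_vector_derivative[symmetric] has_field_derivative_at_within)
  show ?thesis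
  proof (cases "0 \<le> t")
    case True
    have "(?g' has_integral (?g t - ?g 0)) {0..t}" by (rule fundamental_theorem_of_calculus[OF True d])
    thus ?thesis using True by (simp add: oint_def integral_unique uu0 EE0)
  next
    case False
    have "(?g' has_integral (?g 0 - ?g t)) {t..0}" using False by (intro fundamental_theorem_of_calculus d) auto
    thus ?thesis using False by (simp add: oint_def integral_unique uu0 EE0)
  qed
qed

lemma mi_xx: "melnikov_integrand a f (xx a) t =
   - exp (EE a (uu a t)) * (2 * uu a t * ((1 - (uu a t)^2) * (1 - a * uu a t) / 2)) * f (X1 (uu a t))"
  unfolding mi_eq oint_eq by (simp add: F2_alg)

end



definition cc :: real where "cc = 2 * sqrt 3 / 9"

lemma X1_le: "0 \<le> w \<Longrightarrow> X1 w \<le> cc"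
proof -
  assume w: "0 \<le> w"
  define r where "r = sqrt 3"
  have s0: "0 \<le> r" by (simp add: r_def)
  have s2: "r * r = 3" by (simp add: r_def)
  have "0 \<le> (w - r / 3)^2 * (w + 2*r / 3)" using w s0 by (intro mult_nonneg_nonneg) auto
  also have "(w - r / 3)^2 * (w + 2*r / 3) = w^3 - w + 2*r / 9"
  proof -
    have "(w - r / 3)^2 * (w + 2*r / 3) = w^3 - (r*r) * w / 3 + 2*(r*r)*r / 27"
      by (simp add: power2_eq_square power3_eq_cube field_simps)
    thus ?thesis by (simp add: s2)
  qed
  finally have "0 \<le> w^3 - w + 2*r / 9" .
  thus ?thesis unfolding X1_def cc_def r_def[symmetric] by (simp add: power2_eq_square power3_eq_cube algebra_simps)
qed

lemma S_leb: "{-1<..<1::real} \<in> sets lebesgue"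
proof -
  have "bounded {-1<..<1::real}" by (rule bounded_subset[OF compact_imp_bounded[OF compact_Icc[of "-1" 1]]]) auto
  hence "{-1<..<1::real} \<in> lmeasurable" by (intro lmeasurable_open) auto
  thus ?thesis by (rule fmeasurableD)
qed

locale hbf = hb +
  fixes f :: "real \<Rightarrow> real"
  assumes fdiff: "\<And>x. f differentiable (at x)"
    and dcont: "\<And>x. isCont (deriv f) x"
    and fodd: "\<And>x. f (-x) = - f x"
    and fnz: "\<And>x. - 2 * sqrt 3 / 9 \<le> x \<Longrightarrow> x < 0 \<Longrightarrow> f x \<noteq> 0"
begin

lemma fcont: "isCont f x"
  using fdiff differentiable_imp_continuous_within by blast

lemma f0: "f 0 = 0" using fodd[of 0] by simp

lemma fnz': "- cc \<le> x \<Longrightarrow> x < 0 \<Longrightarrow> f x \<noteq> 0"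
  using fnz by (simp add: cc_def)

lemma fK: "\<exists>K\<ge>0. \<forall>y. \<bar>y\<bar> \<le> 1 \<longrightarrow> \<bar>f y\<bar> \<le> K * \<bar>y\<bar>"
proof -
  have "compact (deriv f ` {-1..1})"
    by (intro compact_continuous_image continuous_at_imp_continuous_on ballI dcont) simp
  then obtain B where B: "\<And>z. z \<in> {-1..1} \<Longrightarrow> \<bar>deriv f z\<bar> \<le> B"
    using compact_imp_bounded bounded_iff by (metis imageI real_norm_def)
  have B0: "0 \<le> B" using B[of 0] by simp
  have D: "DERIV f z :> deriv f z" for z using fdiff DERIV_deriv_iff_real_differentiable by blast
  have "\<bar>f y\<bar> \<le> B * \<bar>y\<bar>" if y: "\<bar>y\<bar> \<le> 1" for y
  proof (cases y "0::real" rule: linorder_cases)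
    case less
    obtain l z where z: "y < z" "z < 0" "DERIV f z :> l" "f 0 - f y = (0 - y) * l"
      using MVT[of y 0 f] less fdiff by (auto intro: continuous_at_imp_continuous_on fcont)
    have "l = deriv f z" using DERIV_unique[OF z(3) D] .
    hence "\<bar>l\<bar> \<le> B" using B[of z] z y by auto
    thus ?thesis using z(4) f0 less by (simp add: abs_mult mult.commute mult_right_mono)
  next
    case equal
    thus ?thesis by (simp add: f0)
  next
    case greater
    obtain l z where z: "0 < z" "z < y" "DERIV f z :> l" "f y - f 0 = (y - 0) * l"
      using MVT[of 0 y f] greater fdiff by (auto intro: continuous_at_imp_continuous_on fcont)
    have "l = deriv f z" using DERIV_unique[OF z(3) D] .
    hence "\<bar>l\<bar> \<le> B" using B[of z] z y by auto
    thus ?thesis using z(4) f0 greater by (simp add: abs_mult mult.commute mult_right_mono)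
  qed
  thus ?thesis using B0 by blast
qed

end



lemma helper: "(D::real) \<noteq> 0 \<Longrightarrow> 2 / D * (- e * (2 * v * (D / 2)) * F) = - 2 * v * e * F"
  by (simp add: field_simps)

context hbf begin

definition hh :: "real \<Rightarrow> real" where
  "hh v = \<bar>Tm' a v\<bar> * melnikov_integrand a f (xx a) (Tm a v)"

definition hn :: "real \<Rightarrow> real" where
  "hn v = - 2 * v * exp (EE a v) * f (X1 v)"

lemma hh_eq: "-1 < v \<Longrightarrow> v < 1 \<Longrightarrow> hh v = hn v"
proof -
  assume v: "-1 < v" "v < 1"
  hence ab: "\<bar>v\<bar> < 1" by auto
  have p: "0 < 1 - a * v" using av_pos[OF ab] .
  have q: "0 < 1 - v^2" using abs_square_less_1[of v] ab by auto
  have T: "\<bar>Tm' a v\<bar> = 2 / ((1 - v^2) * (1 - a * v))" using Tm'_pos[OF ab] by (simp add: Tm'_def)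
  show ?thesis unfolding hh_def hn_def T mi_xx uu_Tm[OF v] by (rule helper) (use p q in auto)
qed

lemma EE_cont: "\<bar>v\<bar> < 1 \<Longrightarrow> isCont (EE a) v"
  using EE_deriv DERIV_isCont by blast

lemma hn_cont: "\<bar>v\<bar> < 1 \<Longrightarrow> isCont hn v"
proof -
  assume v: "\<bar>v\<bar> < 1"
  have "isCont (\<lambda>v. f (X1 v)) v"
    by (rule isCont_o2[OF _ fcont]) (unfold X1_def, intro continuous_intros)
  thus ?thesis unfolding hn_def using EE_cont[OF v] by (intro continuous_intros) auto
qed

lemma hn_cont_on: "continuous_on {-1<..<1} hn"
  by (intro continuous_at_imp_continuous_on ballI hn_cont) auto

lemma bnd: "\<exists>C. \<forall>v. -1 < v \<and> v < 1 \<longrightarrow> exp (EE a v) * (1 - v^2) \<le> C"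
proof -
  define C where "C = exp ((k1 a + 1) * ln 2 + (1 - k2 a) * ln 2 + k3 a * ln (1 + a))"
  have k1p: "0 < k1 a + 1" using a1 a0 by (simp add: k1_def field_simps)
  have k2p: "0 < 1 - k2 a" using a1 a0 by (simp add: k2_def field_simps)
  have k3n: "k3 a < 0" using a1 a0 a2 unfolding k3_def
    by (intro divide_pos_neg) auto
  have "exp (EE a v) * (1 - v^2) \<le> C" if v: "-1 < v" "v < 1" for v
  proof -
    have ab: "\<bar>v\<bar> < 1" using v by auto
    have p: "0 < 1 - a * v" using av_pos[OF ab] .
    have "1 - v^2 = exp (ln (1 - v) + ln (1 + v))"
      using v by (simp add: exp_add power2_eq_square algebra_simps)
    hence "exp (EE a v) * (1 - v^2) = exp (EE a v + (ln (1 - v) + ln (1 + v)))"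
      by (simp add: exp_add)
    also have "EE a v + (ln (1 - v) + ln (1 + v)) = (k1 a + 1) * ln (1 - v) + (1 - k2 a) * ln (1 + v) + k3 a * ln (1 - a * v)"
      by (simp add: EE_def algebra_simps)
    finally have eq: "exp (EE a v) * (1 - v^2) = exp ((k1 a + 1) * ln (1 - v) + (1 - k2 a) * ln (1 + v) + k3 a * ln (1 - a * v))" .
    have i1: "(k1 a + 1) * ln (1 - v) \<le> (k1 a + 1) * ln 2"
      using k1p v by (intro mult_left_mono) auto
    have i2: "(1 - k2 a) * ln (1 + v) \<le> (1 - k2 a) * ln 2"
      using k2p v by (intro mult_left_mono) auto
    have "a * (1 + v) \<le> 0" using a0 v by (intro mult_nonpos_nonneg) auto
    hence "ln (1 + a) \<le> ln (1 - a * v)" using a1 p by (subst ln_le_cancel_iff) (auto simp: algebra_simps)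
    hence i3: "k3 a * ln (1 - a * v) \<le> k3 a * ln (1 + a)"
      using k3n by (intro mult_left_mono_neg) auto
    show ?thesis unfolding eq C_def using i1 i2 i3 by simp
  qed
  thus ?thesis by blast
qed

lemma hn_bound: "\<exists>M. \<forall>v. -1 < v \<and> v < 1 \<longrightarrow> \<bar>hn v\<bar> \<le> M"
proof -
  obtain K where K: "0 \<le> K" "\<And>y. \<bar>y\<bar> \<le> 1 \<Longrightarrow> \<bar>f y\<bar> \<le> K * \<bar>y\<bar>" using fK by blast
  obtain C where C: "\<And>v. -1 < v \<Longrightarrow> v < 1 \<Longrightarrow> exp (EE a v) * (1 - v^2) \<le> C" using bnd by blast
  have "\<bar>hn v\<bar> \<le> 2 * K * C" if v: "-1 < v" "v < 1" for v
  proof -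
    have q: "0 \<le> 1 - v^2" "v^2 \<le> 1" using abs_square_less_1[of v] v by auto
    have av: "\<bar>v\<bar> \<le> 1" using v by auto
    have x1: "\<bar>X1 v\<bar> = (1 - v^2) * \<bar>v\<bar>" using q by (simp add: X1_def abs_mult)
    have "\<bar>X1 v\<bar> \<le> 1" unfolding x1 using q av by (intro mult_le_one) auto
    hence fb: "\<bar>f (X1 v)\<bar> \<le> K * ((1 - v^2) * \<bar>v\<bar>)" using K(2)[of "X1 v"] x1 by simp
    have "\<bar>hn v\<bar> = 2 * \<bar>v\<bar> * exp (EE a v) * \<bar>f (X1 v)\<bar>" by (simp add: hn_def abs_mult)
    also have "\<dots> \<le> 2 * \<bar>v\<bar> * exp (EE a v) * (K * ((1 - v^2) * \<bar>v\<bar>))"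
      using fb by (intro mult_left_mono) auto
    also have "\<dots> = 2 * K * (exp (EE a v) * (1 - v^2)) * (\<bar>v\<bar> * \<bar>v\<bar>)" by (simp add: algebra_simps)
    also have "\<dots> \<le> 2 * K * C * 1"
    proof (rule mult_mono)
      show "2 * K * (exp (EE a v) * (1 - v^2)) \<le> 2 * K * C" using C[OF v] K(1) by (intro mult_left_mono) auto
      show "\<bar>v\<bar> * \<bar>v\<bar> \<le> 1" using av by (intro mult_le_one) auto
      show "0 \<le> 2 * K * C" using C[OF v] K(1) q by (intro mult_nonneg_nonneg) (auto intro: order_trans[rotated])
    qed auto
    finally show ?thesis by simp
  qed
  thus ?thesis by blast
qed

lemma hh_absint: "hh absolutely_integrable_on {-1<..<1}"
proof -
  obtain M where M: "\<And>v. -1 < v \<Longrightarrow> v < 1 \<Longrightarrow> \<bar>hn v\<bar> \<le> M" using hn_bound by blast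
  have "continuous_on {-1<..<1} hh" using hn_cont_on by (subst continuous_on_cong[OF refl hh_eq]) auto
  hence meas: "hh \<in> borel_measurable (lebesgue_on {-1<..<1})"
    by (rule continuous_imp_measurable_on_sets_lebesgue[OF _ S_leb])
  have ci: "(\<lambda>x. M) integrable_on {-1<..<(1::real)}"
  proof -
    have "(\<lambda>x. M) integrable_on cbox (-1) (1::real)" by (rule integrable_const)
    thus ?thesis by (simp add: integrable_on_open_interval_real)
  qed
  show ?thesis
    by (rule measurable_bounded_by_integrable_imp_absolutely_integrable[OF meas S_leb ci])
       (use M hh_eq in auto)
qed

lemma Tm_image: "Tm a ` {-1<..<1} = UNIV"
  using Tm_surj by (auto simp: image_iff) (metis greaterThanLessThan_iff)

lemma mi_int: "(melnikov_integrand a f (xx a) has_integral integral {-1<..<1} hh) UNIV"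
proof -
  have der: "(Tm a has_field_derivative Tm' a x) (at x within {-1<..<1})" if "x \<in> {-1<..<1}" for x
    using that Tm_deriv[of x] by (auto intro: has_field_derivative_at_within)
  have "(\<lambda>x. \<bar>Tm' a x\<bar> * melnikov_integrand a f (xx a) (Tm a x)) absolutely_integrable_on {-1<..<1} \<and>
        integral {-1<..<1} (\<lambda>x. \<bar>Tm' a x\<bar> * melnikov_integrand a f (xx a) (Tm a x)) = integral {-1<..<1} hh
     \<longleftrightarrow> melnikov_integrand a f (xx a) absolutely_integrable_on (Tm a ` {-1<..<1}) \<and>
        integral (Tm a ` {-1<..<1}) (melnikov_integrand a f (xx a)) = integral {-1<..<1} hh"
    by (rule has_absolute_integral_change_of_variables_1'[OF S_leb der Tm_inj])
  moreover have "(\<lambda>x. \<bar>Tm' a x\<bar> * melnikov_integrand a f (xx a) (Tm a x)) = hh"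
    by (simp add: hh_def[abs_def])
  ultimately have "melnikov_integrand a f (xx a) absolutely_integrable_on UNIV \<and>
        integral UNIV (melnikov_integrand a f (xx a)) = integral {-1<..<1} hh"
    using hh_absint Tm_image by simp
  thus ?thesis using integrable_integral absolutely_integrable_on_def by metis
qed

end



lemma cc_pos: "0 < cc" by (simp add: cc_def)

context hbf begin

lemma sign_f: "- cc \<le> y \<Longrightarrow> y < 0 \<Longrightarrow> 0 < f y * f (- cc)"
proof (rule ccontr)
  assume y: "- cc \<le> y" "y < 0" and n: "\<not> 0 < f y * f (- cc)"
  have fy: "f y \<noteq> 0" using fnz' y by auto
  have fc: "f (- cc) \<noteq> 0" using fnz' cc_pos by auto
  have cont: "continuous_on {- cc..y} f" by (intro continuous_at_imp_continuous_on ballI fcont)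
  have "\<exists>x. - cc \<le> x \<and> x \<le> y \<and> f x = 0"
  proof (cases "f (- cc) < 0")
    case True
    hence "0 \<le> f y" using n by (metis mult_neg_neg not_le)
    thus ?thesis using IVT'[of f "- cc" 0 y] True y cont by auto
  next
    case False
    hence "0 < f (- cc)" using fc by auto
    hence "f y \<le> 0" using n by (metis mult_pos_pos not_le)
    thus ?thesis using IVT2'[of f y 0 "- cc"] \<open>0 < f (- cc)\<close> y cont by auto
  qed
  then obtain x where "- cc \<le> x" "x \<le> y" "f x = 0" by blast
  thus False using fnz'[of x] y by auto
qed

lemma hn_pos: "-1 < v \<Longrightarrow> v < 1 \<Longrightarrow> v \<noteq> 0 \<Longrightarrow> 0 < f (- cc) * hn v"
proof -
  assume v: "-1 < v" "v < 1" "v \<noteq> 0"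
  have q: "0 < 1 - v^2" using abs_square_less_1[of v] v by auto
  have e: "0 < exp (EE a v)" by simp
  have eq: "f (- cc) * hn v = (- 2 * v) * exp (EE a v) * (f (X1 v) * f (- cc))"
    by (simp add: hn_def algebra_simps)
  show ?thesis
  proof (cases "v < 0")
    case True
    have y0: "X1 v < 0" unfolding X1_def using q True by (simp add: mult_pos_neg)
    have "X1 (- v) \<le> cc" using X1_le True by simp
    moreover have "X1 (- v) = - X1 v" by (simp add: X1_def)
    ultimately have "- cc \<le> X1 v" by simp
    hence "0 < f (X1 v) * f (- cc)" using sign_f y0 by simp
    moreover have "0 < (- 2 * v) * exp (EE a v)" by (rule mult_pos_pos) (use True e in auto)
    ultimately show ?thesis unfolding eq by (metis mult_pos_pos)
  next
    case False
    hence vp: "0 < v" using v by simp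
    have y0: "0 < X1 v" unfolding X1_def using q vp by simp
    have "X1 v \<le> cc" using X1_le vp by simp
    hence "0 < f (- X1 v) * f (- cc)" using sign_f y0 by simp
    hence "f (X1 v) * f (- cc) < 0" using fodd[of "X1 v"] by simp
    moreover have "(- 2 * v) * exp (EE a v) < 0" by (rule mult_neg_pos) (use vp e in auto)
    ultimately show ?thesis unfolding eq by (metis mult_neg_neg)
  qed
qed

lemma hn_nonneg: "-1 < v \<Longrightarrow> v < 1 \<Longrightarrow> 0 \<le> f (- cc) * hn v"
  using hn_pos[of v] by (cases "v = 0") (auto simp: hn_def)

lemma M_nz: "integral {-1<..<1} hh \<noteq> 0"
proof -
  define \<sigma> where "\<sigma> = f (- cc)"
  let ?S = "{-1<..<1::real}"
  let ?I = "{1/4..1/2::real}"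
  have hi: "hh integrable_on ?S" by (rule set_lebesgue_integral_eq_integral(1)[OF hh_absint])
  have gi: "(\<lambda>v. \<sigma> * hh v) integrable_on ?S" using integrable_cmul[OF hi, of \<sigma>] by simp
  have sub: "?I \<subseteq> ?S" by auto
  have ceq: "\<And>v. v \<in> ?I \<Longrightarrow> \<sigma> * hh v = \<sigma> * hn v" using hh_eq by auto
  have cn: "continuous_on ?I hn" by (rule continuous_on_subset[OF hn_cont_on sub])
  have cn2: "continuous_on ?I (\<lambda>v. \<sigma> * hn v)" by (rule continuous_on_mult[OF continuous_on_const cn])
  have ceqv: "continuous_on ?I (\<lambda>v. \<sigma> * hh v) = continuous_on ?I (\<lambda>v. \<sigma> * hn v)"
    by (rule continuous_on_cong[OF refl ceq])
  have cI: "continuous_on ?I (\<lambda>v. \<sigma> * hh v)" using cn2 ceqv by simp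
  have gI: "(\<lambda>v. \<sigma> * hh v) integrable_on ?I" by (rule integrable_continuous_real[OF cI])
  have "integral ?I (\<lambda>v. \<sigma> * hh v) \<le> integral ?S (\<lambda>v. \<sigma> * hh v)"
  proof (rule integral_subset_le[OF sub gI gi])
    show "\<forall>x\<in>?S. 0 \<le> \<sigma> * hh x"
    proof
      fix x assume "x \<in> ?S"
      hence x: "-1 < x" "x < 1" by auto
      show "0 \<le> \<sigma> * hh x" using hh_eq[OF x] hn_nonneg[OF x] by (simp add: \<sigma>_def)
    qed
  qed
  moreover have "integral ?I (\<lambda>_. 0::real) < integral ?I (\<lambda>v. \<sigma> * hh v)"
  proof (rule integral_less_real[OF continuous_on_const cI])
    show "{1/4<..<1/2::real} \<noteq> {}" by simp
    fix x assume "x \<in> {1/4<..<1/2::real}"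
    hence x: "-1 < x" "x < 1" "x \<noteq> 0" and xI: "x \<in> ?I" by auto
    show "0 < \<sigma> * hh x" using hh_eq[of x] x hn_pos[OF x] by (simp add: \<sigma>_def)
  qed
  ultimately have "0 < integral ?S (\<lambda>v. \<sigma> * hh v)" by simp
  also have "integral ?S (\<lambda>v. \<sigma> * hh v) = \<sigma> * integral ?S hh" using integral_mult[OF hi, of \<sigma>] by simp
  finally show ?thesis by auto
qed

end

theorem theorem5:
  fixes a :: real and f :: "real \<Rightarrow> real"
  assumes a_range: "-1 < a" "a < 0"
    and smooth: "\<forall>n x. ((deriv ^^ n) f) differentiable (at x)"
    and odd: "\<forall>x. f (-x) = - f x"
    and nonzero: "\<forall>x. - 2 * sqrt 3 / 9 \<le> x \<and> x < 0 \<longrightarrow> f x \<noteq> 0"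
  shows
    "Fv a f 0 0 = 0 \<and>
     (\<exists>D l1 l2. (Fv a f 0 has_derivative D) (at 0) \<and>
        {l. \<exists>v. v \<noteq> 0 \<and> matrix D *v v = l *\<^sub>R v} = {l1, l2} \<and>
        l1 < 0 \<and> 0 < l2 \<and> l1 + l2 \<noteq> 0 \<and> l1 + l2 < 0) \<and>
     (\<exists>x :: real \<Rightarrow> real^2.
        (\<forall>t. (x has_vector_derivative Fv a f 0 (x t)) (at t)) \<and>
        x 0 = (\<chi> i. if i = 1 then 0 else -1) \<and>
        range x = {p. - ((p$1)^2) + ((p$2)^2) * (1 + p$2) = 0 \<and> p$2 < 0} \<and>
        omega_limit x = {0} \<and> alpha_limit x = {0} \<and>
        (\<exists>M. (melnikov_integrand a f x has_integral M) UNIV \<and> M \<noteq> 0))"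
proof -
  have fd: "\<And>x. f differentiable (at x)" using smooth[rule_format, of 0] by simp
  have dc: "\<And>x. isCont (deriv f) x"
    using smooth[rule_format, of 1] differentiable_imp_continuous_within by auto
  interpret hbf a f
    by unfold_locales (use a_range fd dc odd nonzero in auto)
  have P1: "\<exists>D l1 l2. (Fv a f 0 has_derivative D) (at 0) \<and>
        {l. \<exists>v. v \<noteq> 0 \<and> matrix D *v v = l *\<^sub>R v} = {l1, l2} \<and>
        l1 < 0 \<and> 0 < l2 \<and> l1 + l2 \<noteq> 0 \<and> l1 + l2 < 0"
    using Fv_der eig a_range by (intro exI[of _ "DD a"] exI[of _ "a - 1"] exI[of _ "a + 1"]) auto
  have P2: "\<exists>x :: real \<Rightarrow> real^2.
        (\<forall>t. (x has_vector_derivative Fv a f 0 (x t)) (at t)) \<and>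
        x 0 = (\<chi> i. if i = 1 then 0 else -1) \<and>
        range x = {p. - ((p$1)^2) + ((p$2)^2) * (1 + p$2) = 0 \<and> p$2 < 0} \<and>
        omega_limit x = {0} \<and> alpha_limit x = {0} \<and>
        (\<exists>M. (melnikov_integrand a f x has_integral M) UNIV \<and> M \<noteq> 0)"
    using xx_deriv xx0 xx_range omega_xx alpha_xx mi_int M_nz by (intro exI[of _ "xx a"]) blast
  show ?thesis using Fv00 P1 P2 by blast
qed


end
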